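(* Let $0\le a\le 1$. Then for every $v>0$, $$\int_0^a \frac{e^{-vu}\,u\, du}{\log^2 u+1}\approx \frac{1}{(v+1/a)^2\bigl(\log^2 (v+1/a)+1\bigr)}.$$ If additionally $av\le 1$, then $$\int_a^1 \frac{e^{-vu}\,u^{1/2}\, du}{1-\log u}\approx \frac{1-a}{(v+1)^{3/2}\bigl(1+\log (v+1)\bigr)}.$$
   Context: $f\approx g$ means $c^{-1}g\le f\le cg$ for an absolute constant $c>0$, uniformly over the indicated $a$ and $v$. *)

theory Defs
  imports "HOL-Analysis.Analysis"
begin

end

theory Submission
  imports Defs
begin


lemma cont_from_zero:
  fixes f :: "real \<Rightarrow> real" and b :: real
  assumes "\<And>x. 0 < x \<Longrightarrow> x \<le> b \<Longrightarrow> isCont f x"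
    and "f 0 = 0"
    and "\<And>u. 0 \<le> u \<Longrightarrow> u \<le> b \<Longrightarrow> \<bar>f u\<bar> \<le> sqrt u"
  shows "continuous_on {0..b} f"
  unfolding continuous_on_eq_continuous_within
proof
  fix x assume x: "x \<in> {0..b}"
  show "continuous (at x within {0..b}) f"
  proof (cases "x = 0")
    case False
    then show ?thesis using x assms(1) by (auto intro: continuous_at_imp_continuous_within)
  next
    case True
    have "(f \<longlongrightarrow> 0) (at 0 within {0..b})"
    proof (rule Lim_null_comparison)
      show "\<forall>\<^sub>F u in at 0 within {0..b}. norm (f u) \<le> sqrt u"
        unfolding eventually_at_filter using assms(3) by (auto intro!: always_eventually)
      have "((\<lambda>u. sqrt u) \<longlongrightarrow> sqrt 0) (at 0 within {0..b})"
        by (intro tendsto_intros)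
      then show "((\<lambda>u. sqrt u) \<longlongrightarrow> 0) (at 0 within {0..b})" by simp
    qed
    then show ?thesis using True assms(2) by (simp add: continuous_within)
  qed
qed

definition F1 :: "real \<Rightarrow> real \<Rightarrow> real" where
  "F1 v u = exp (- v * u) * u / ((ln u)\<^sup>2 + 1)"
definition G2 :: "real \<Rightarrow> real \<Rightarrow> real" where
  "G2 v u = exp (- v * u) * sqrt u / (1 - ln u)"

lemma F1_cont: assumes "v > 0" "b \<le> 1" shows "continuous_on {0..b} (F1 v)"
proof (rule cont_from_zero)
  fix x :: real assume "0 < x" "x \<le> b"
  moreover have "(ln x)\<^sup>2 + 1 \<noteq> 0" by (smt (verit) zero_le_power2)
  ultimately show "isCont (F1 v) x" unfolding F1_def
    by (auto intro!: continuous_intros)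
next
  show "F1 v 0 = 0" by (simp add: F1_def)
next
  fix u :: real assume u: "0 \<le> u" "u \<le> b"
  have "\<bar>F1 v u\<bar> = exp (- v * u) * u / ((ln u)\<^sup>2 + 1)" using u unfolding F1_def
    by (simp add: abs_mult)
  also have "\<dots> \<le> 1 * u / 1"
    using u assms by (intro frac_le mult_mono) auto
  also have "\<dots> \<le> sqrt u" using u assms
    by (intro real_le_rsqrt) (simp add: power2_eq_square mult_left_le_one_le)
  finally show "\<bar>F1 v u\<bar> \<le> sqrt u" .
qed

lemma G2_cont: assumes "v > 0" shows "continuous_on {0..1} (G2 v)"
proof (rule cont_from_zero)
  fix x :: real assume x: "0 < x" "x \<le> 1"
  then have "ln x \<le> 0" by simp
  then have "1 - ln x \<noteq> 0" by simp
  then show "isCont (G2 v) x" unfolding G2_def using x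
    by (auto intro!: continuous_intros)
next
  show "G2 v 0 = 0" by (simp add: G2_def)
next
  fix u :: real assume u: "0 \<le> u" "u \<le> 1"
  have "ln u \<le> 0" using u by (cases "u = 0") auto
  have "\<bar>G2 v u\<bar> = exp (- v * u) * sqrt u / (1 - ln u)" using u \<open>ln u \<le> 0\<close> unfolding G2_def
    by (simp add: abs_mult)
  also have "\<dots> \<le> 1 * sqrt u / 1"
    using u assms \<open>ln u \<le> 0\<close> by (intro frac_le mult_mono) auto
  finally show "\<bar>G2 v u\<bar> \<le> sqrt u" by simp
qed



lemma exp_pow_bound:
  fixes x :: real and n :: nat
  assumes "x \<ge> 0" "n > 0"
  shows "(1 + x) ^ n \<le> real n ^ n * exp x"
proof -
  have "1 + x \<le> real n * (1 + x / n)" using assms by (simp add: field_simps)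
  then have "(1 + x) ^ n \<le> (real n * (1 + x / n)) ^ n"
    using assms by (intro power_mono) auto
  also have "\<dots> = real n ^ n * (1 + x/n) ^ n" by (simp add: power_mult_distrib)
  also have "(1 + x/n) ^ n \<le> exp (x/n) ^ n"
    using assms by (intro power_mono) (auto simp: exp_ge_add_one_self)
  also have "exp (x/n) ^ n = exp x"
    using assms by (simp add: exp_of_nat_mult[symmetric])
  finally show ?thesis by (simp add: mult_left_mono)
qed

lemma P1_up1:
  fixes a v u :: real
  assumes a: "0 < a" "a \<le> 1" and v: "v > 0"
    and u: "0 \<le> u" "u \<le> 1 / (v + 1/a)"
  shows "F1 v u \<le> (1 / (v + 1/a)) / ((ln (v + 1/a))\<^sup>2 + 1)"
proof (cases "u = 0")
  case True then show ?thesis using a v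
    by (simp add: F1_def)
next
  case False
  define w where "w = v + 1/a"
  have "1/a \<ge> 1" using a by simp
  then have w1: "w \<ge> 1" using v unfolding w_def by linarith
  have up: "u > 0" using u False by auto
  have "u \<le> 1/w" using u unfolding w_def by simp
  then have "ln u \<le> ln (1/w)" using up w1 by (subst ln_le_cancel_iff) auto
  also have "ln (1/w) = - ln w" using w1 by (simp add: ln_div)
  finally have "ln u \<le> - ln w" .
  moreover have "ln w \<ge> 0" using w1 by simp
  ultimately have "(ln w)\<^sup>2 \<le> (- ln u)\<^sup>2" by (intro power_mono) auto
  then have "(ln w)\<^sup>2 \<le> (ln u)\<^sup>2" by simp
  have "F1 v u = exp (- v * u) * u / ((ln u)\<^sup>2 + 1)" by (simp add: F1_def)
  also have "\<dots> \<le> 1 * (1/w) / ((ln w)\<^sup>2 + 1)"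
    using up \<open>u \<le> 1/w\<close> w1 v \<open>(ln w)\<^sup>2 \<le> (ln u)\<^sup>2\<close>
    by (intro frac_le mult_mono) (auto simp: add_nonneg_pos)
  finally show ?thesis unfolding w_def by simp
qed

lemma sq_ineq: fixes M D :: real shows "(M + D)\<^sup>2 + 1 \<le> 2 * (M\<^sup>2 + 1) * (D\<^sup>2 + 1)"
proof -
  have "2 * (M\<^sup>2 + 1) * (D\<^sup>2 + 1) - ((M + D)\<^sup>2 + 1) = 2 * (M*D)\<^sup>2 + (M - D)\<^sup>2 + 1"
    by (simp add: power2_eq_square algebra_simps)
  moreover have "0 \<le> 2 * (M*D)\<^sup>2 + (M - D)\<^sup>2 + 1" by simp
  ultimately show ?thesis by linarith
qed

lemma P1_up2:
  fixes a v u :: real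
  assumes a: "0 < a" "a \<le> 1" and v: "v > 0"
    and u: "1 / (v + 1/a) \<le> u" "u \<le> a"
  shows "F1 v u \<le> 12500 * (1 / (v + 1/a))^3 / (((ln (v + 1/a))\<^sup>2 + 1) * u\<^sup>2)"
proof -
  define w where "w = v + 1/a"
  define s where "s = 1 / w"
  have "1/a \<ge> 1" using a by simp
  then have w1: "w \<ge> 1" using v unfolding w_def by linarith
  have s0: "s > 0" using w1 unfolding s_def by simp
  have us: "s \<le> u" using u unfolding s_def w_def by simp
  have u0: "u > 0" using us s0 by linarith
  have u1: "u \<le> 1" using u a by linarith
  define r where "r = u * w"
  have r1: "r \<ge> 1" using us w1 unfolding r_def s_def by (simp add: divide_le_eq mult.commute)
  have urs: "u = r * s" unfolding r_def s_def using w1 by simp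
  have "u / a \<le> 1" using u a by simp
  then have ruv: "r \<le> 1 + u * v" unfolding r_def w_def by (simp add: algebra_simps)
  define M where "M = - ln u"
  define D where "D = ln r"
  have M0: "M \<ge> 0" using u0 u1 unfolding M_def by simp
  have D0: "D \<ge> 0" using r1 unfolding D_def by simp
  have "ln w = ln (r / u)" unfolding r_def using u0 by simp
  also have "\<dots> = ln r - ln u" using u0 r1 by (simp add: ln_div)
  finally have LMD: "ln w = M + D" unfolding M_def D_def by simp
  have "D \<le> r - 1" unfolding D_def using r1 by (intro ln_le_minus_one) simp
  then have Dr: "D\<^sup>2 \<le> r\<^sup>2" using D0 by (intro power_mono) auto
  have "(ln w)\<^sup>2 + 1 \<le> 2 * (M\<^sup>2 + 1) * (D\<^sup>2 + 1)" unfolding LMD by (rule sq_ineq)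
  also have "\<dots> \<le> 2 * (M\<^sup>2 + 1) * (r\<^sup>2 + 1)" using Dr by (intro mult_left_mono) auto
  also have "1 \<le> r\<^sup>2" using r1 by (simp add: one_le_power)
  then have "r\<^sup>2 + 1 \<le> 2 * r\<^sup>2" by linarith
  then have "2 * (M\<^sup>2 + 1) * (r\<^sup>2 + 1) \<le> 2 * (M\<^sup>2 + 1) * (2 * r\<^sup>2)" by (intro mult_left_mono) auto
  also have "2 * (M\<^sup>2 + 1) * (2 * r\<^sup>2) = 4 * (M\<^sup>2 + 1) * r\<^sup>2" by simp
  finally have h1: "(ln w)\<^sup>2 + 1 \<le> 4 * (M\<^sup>2 + 1) * r\<^sup>2" .
  define E where "E = exp (- v * u)"
  have E0: "E > 0" unfolding E_def by simp
  have "r ^ 5 \<le> (1 + u * v) ^ 5" using ruv r1 by (intro power_mono) auto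
  also have "\<dots> \<le> real 5 ^ 5 * exp (u * v)" using u0 v by (intro exp_pow_bound) auto
  finally have "E * r ^ 5 \<le> E * (3125 * exp (u * v))" using E0 by (intro mult_left_mono) auto
  also have "\<dots> = 3125" unfolding E_def by (simp add: exp_minus field_simps)
  finally have h2: "E * r ^ 5 \<le> 3125" .
  define P where "P = (ln w)\<^sup>2 + 1"
  define Q where "Q = M\<^sup>2 + 1"
  have P0: "P > 0" unfolding P_def by (simp add: add_nonneg_pos)
  have Q0: "Q > 0" unfolding Q_def by (simp add: add_nonneg_pos)
  have "E * u * P * u\<^sup>2 \<le> E * u * (4 * Q * r\<^sup>2) * u\<^sup>2"
    using h1 E0 u0 unfolding P_def Q_def by (intro mult_right_mono mult_left_mono) auto
  also have "\<dots> = 4 * Q * s ^ 3 * (E * r ^ 5)" unfolding urs by (simp add: power2_eq_square power3_eq_cube eval_nat_numeral algebra_simps)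
  also have "\<dots> \<le> 4 * Q * s ^ 3 * 3125" using h2 Q0 s0 by (intro mult_left_mono) auto
  finally have key: "E * u * P * u\<^sup>2 \<le> 12500 * s ^ 3 * Q" by (simp add: mult.commute mult.left_commute)
  have "F1 v u = E * u / Q" unfolding F1_def E_def Q_def M_def by simp
  also have "\<dots> = (E * u * P * u\<^sup>2) / (Q * (P * u\<^sup>2))" using P0 Q0 u0 by (simp add: field_simps)
  also have "\<dots> \<le> (12500 * s ^ 3 * Q) / (Q * (P * u\<^sup>2))" using key P0 Q0 u0 by (intro divide_right_mono) auto
  also have "\<dots> = 12500 * s ^ 3 / (P * u\<^sup>2)" using Q0 by simp
  finally show ?thesis unfolding s_def P_def w_def .
qed

lemma P1_low:
  fixes a v u :: real
  assumes a: "0 < a" "a \<le> 1" and v: "v > 0"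
    and u: "(1 / (v + 1/a)) / 2 \<le> u" "u \<le> 1 / (v + 1/a)"
  shows "exp (- 1) * (1 / (v + 1/a)) / (6 * ((ln (v + 1/a))\<^sup>2 + 1)) \<le> F1 v u"
proof -
  define w where "w = v + 1/a"
  define s where "s = 1 / w"
  have "1/a \<ge> 1" using a by simp
  then have w1: "w \<ge> 1" using v unfolding w_def by linarith
  have s0: "s > 0" using w1 unfolding s_def by simp
  have s1: "s \<le> 1" using w1 unfolding s_def by simp
  have us: "s / 2 \<le> u" "u \<le> s" using u unfolding s_def w_def by auto
  have u0: "u > 0" using us s0 by linarith
  have "v * u \<le> v * s" using us v by (intro mult_left_mono) auto
  also have "v * s \<le> 1" unfolding s_def w_def using a v
    by (simp add: field_simps) (simp add: divide_le_eq add_pos_pos)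
  finally have "- 1 \<le> - v * u" by simp
  then have E: "exp (- 1) \<le> exp (- v * u)" by simp
  define L where "L = ln w"
  have L0: "L \<ge> 0" unfolding L_def using w1 by simp
  have lu0: "ln u \<le> 0" using u0 us s1 by simp
  have "ln (s / 2) \<le> ln u" using us s0 by (subst ln_le_cancel_iff) auto
  moreover have "ln (s / 2) = ln s - ln 2" using s0 by (simp add: ln_div)
  moreover have "ln s = - L" unfolding s_def L_def using w1 by (simp add: ln_div)
  moreover have "ln (2::real) \<le> 1" using ln_le_minus_one[of 2] by simp
  ultimately have "- ln u \<le> L + 1" by linarith
  then have "(- ln u)\<^sup>2 \<le> (L + 1)\<^sup>2" using lu0 by (intro power_mono) auto
  also have "\<dots> \<le> 2 * L\<^sup>2 + 2"
  proof -
    have "2 * L\<^sup>2 + 2 - (L + 1)\<^sup>2 = (L - 1)\<^sup>2" by (simp add: power2_eq_square algebra_simps)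
    then show ?thesis using zero_le_power2[of "L - 1"] by linarith
  qed
  finally have "(ln u)\<^sup>2 \<le> 2 * L\<^sup>2 + 2" by simp
  then have Q: "(ln u)\<^sup>2 + 1 \<le> 3 * (L\<^sup>2 + 1)" using zero_le_power2[of L] unfolding distrib_left by linarith
  have "exp (- 1) * s / (6 * (L\<^sup>2 + 1)) = (exp (- 1) * (s / 2)) / (3 * (L\<^sup>2 + 1))" by simp
  also have "\<dots> \<le> (exp (- v * u) * u) / ((ln u)\<^sup>2 + 1)"
    using E us s0 Q by (intro frac_le mult_mono) (auto simp: add_nonneg_pos)
  also have "\<dots> = F1 v u" unfolding F1_def by simp
  finally show ?thesis unfolding s_def L_def w_def .
qed



lemma P2_up0:
  fixes v u :: real
  assumes v: "v > 0" and u: "0 \<le> u" "u \<le> 1 / (v + 1)"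
  shows "G2 v u \<le> sqrt (1 / (v + 1)) / (1 + ln (v + 1))"
proof (cases "u = 0")
  case True then show ?thesis using v by (simp add: G2_def)
next
  case False
  define w where "w = v + 1"
  have w1: "w \<ge> 1" using v unfolding w_def by simp
  have up: "u > 0" using u False by auto
  have uw: "u \<le> 1/w" using u unfolding w_def by simp
  then have "ln u \<le> ln (1/w)" using up w1 by (subst ln_le_cancel_iff) auto
  also have "ln (1/w) = - ln w" using w1 by (simp add: ln_div)
  finally have lu: "1 + ln w \<le> 1 - ln u" by simp
  have L0: "ln w \<ge> 0" using w1 by simp
  have P: "0 < 1 + ln w" using L0 by linarith
  have "G2 v u = exp (- v * u) * sqrt u / (1 - ln u)" by (simp add: G2_def)
  also have "\<dots> \<le> 1 * sqrt (1/w) / (1 + ln w)"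
    using up uw w1 v lu L0
    by (intro frac_le mult_mono) (auto simp: P)
  finally show ?thesis unfolding w_def by simp
qed

lemma P2_up:
  fixes v u :: real
  assumes v: "v > 0" and u: "0 < u" "u \<le> 1"
  shows "G2 v u \<le> 512 * sqrt (1 / (v + 1)) * (1 / (v + 1))\<^sup>2 / ((1 + ln (v + 1)) * u\<^sup>2)"
proof -
  define w where "w = v + 1"
  define t where "t = 1 / w"
  have w1: "w \<ge> 1" using v unfolding w_def by simp
  have t0: "t > 0" using w1 unfolding t_def by simp
  define L where "L = ln w"
  have L0: "L \<ge> 0" using w1 unfolding L_def by simp
  define E where "E = exp (- v * u)"
  have E0: "E > 0" unfolding E_def by simp
  have P0: "1 + L > 0" using L0 by simp
  show ?thesis
  proof (cases "u \<le> t")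
    case True
    have "G2 v u \<le> sqrt t / (1 + L)" using P2_up0[of v u] v u True unfolding t_def w_def L_def by simp
    also have "\<dots> \<le> 512 * sqrt t * (t\<^sup>2 / u\<^sup>2) / (1 + L)"
    proof -
      have "1 \<le> t\<^sup>2 / u\<^sup>2" using True u by (simp add: power_mono)
      then have "sqrt t * 1 \<le> sqrt t * (t\<^sup>2 / u\<^sup>2)" using t0 by (intro mult_left_mono) auto
      also have "\<dots> \<le> 512 * (sqrt t * (t\<^sup>2 / u\<^sup>2))"
      proof -
        have X: "0 \<le> sqrt t * (t\<^sup>2 / u\<^sup>2)" using t0 by simp
        show ?thesis using X by linarith
      qed
      also have "\<dots> = 512 * sqrt t * (t\<^sup>2 / u\<^sup>2)" by simp
      finally show ?thesis using P0 by (intro divide_right_mono) auto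
    qed
    also have "\<dots> = 512 * sqrt t * t\<^sup>2 / ((1 + L) * u\<^sup>2)" by simp
    finally show ?thesis unfolding t_def L_def w_def .
  next
    case False
    then have ut: "t \<le> u" by simp
    define r where "r = u * w"
    have r1: "r \<ge> 1" using ut w1 unfolding r_def t_def by (simp add: divide_le_eq mult.commute)
    have urt: "u = r * t" unfolding r_def t_def using w1 by simp
    have ruv: "r \<le> 1 + u * v" unfolding r_def w_def using u by (simp add: algebra_simps)
    define M where "M = - ln u"
    define D where "D = ln r"
    have M0: "M \<ge> 0" using u unfolding M_def by simp
    have D0: "D \<ge> 0" using r1 unfolding D_def by simp
    have "ln w = ln (r / u)" unfolding r_def using u by simp
    also have "\<dots> = ln r - ln u" using u r1 by (simp add: ln_div)
    finally have LMD: "L = M + D" unfolding M_def D_def L_def by simp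
    have "D \<le> r - 1" unfolding D_def using r1 by (intro ln_le_minus_one) simp
    have "1 + L \<le> (1 + M) * (1 + D)" unfolding LMD using M0 D0 by (simp add: algebra_simps)
    also have "\<dots> \<le> (1 + M) * (2 * r)" using \<open>D \<le> r - 1\<close> r1 M0 by (intro mult_left_mono) auto
    also have "(1 + M) * (2 * r) = 2 * (1 + M) * r" by simp
    finally have h1: "1 + L \<le> 2 * (1 + M) * r" .
    have "sqrt u = sqrt r * sqrt t" unfolding urt by (simp add: real_sqrt_mult)
    also have "r \<le> r\<^sup>2" using r1 by (simp add: power2_eq_square mult_le_cancel_left1)
    then have "sqrt r \<le> sqrt (r\<^sup>2)" by (rule real_sqrt_le_mono)
    then have "sqrt r \<le> r" using r1 by simp
    then have "sqrt r * sqrt t \<le> r * sqrt t" using t0 by (intro mult_right_mono) auto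
    finally have su: "sqrt u \<le> r * sqrt t" .
    have "r ^ 4 \<le> (1 + u * v) ^ 4" using ruv r1 by (intro power_mono) auto
    also have "\<dots> \<le> real 4 ^ 4 * exp (u * v)" using u v by (intro exp_pow_bound) auto
    finally have "E * r ^ 4 \<le> E * (256 * exp (u * v))" using E0 by (intro mult_left_mono) auto
    also have "\<dots> = 256" unfolding E_def by (simp add: exp_minus field_simps)
    finally have h2: "E * r ^ 4 \<le> 256" .
    define Q where "Q = 1 + M"
    have Q0: "Q > 0" unfolding Q_def using M0 by simp
    have "E * sqrt u * (1 + L) * u\<^sup>2 \<le> E * (r * sqrt t) * (2 * Q * r) * u\<^sup>2"
      using h1 su E0 u Q0 r1 t0 P0 unfolding Q_def by (intro mult_right_mono mult_mono) auto
    also have "\<dots> = 2 * Q * sqrt t * t\<^sup>2 * (E * r ^ 4)" unfolding urt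
      by (simp add: power2_eq_square eval_nat_numeral algebra_simps)
    also have "\<dots> \<le> 2 * Q * sqrt t * t\<^sup>2 * 256" using h2 Q0 t0 by (intro mult_left_mono) auto
    finally have key: "E * sqrt u * (1 + L) * u\<^sup>2 \<le> 512 * sqrt t * t\<^sup>2 * Q"
      by (simp add: mult.commute mult.left_commute)
    have G: "G2 v u = E * sqrt u / Q" unfolding G2_def E_def Q_def M_def by simp
    define K where "K = (1 + L) * u\<^sup>2"
    have K0: "K > 0" unfolding K_def using P0 u by simp
    have key': "E * sqrt u * K \<le> 512 * sqrt t * t\<^sup>2 * Q" using key unfolding K_def by (simp add: mult.assoc)
    have "E * sqrt u / Q = (E * sqrt u * K) / (Q * K)" using K0 by simp
    also have "\<dots> \<le> (512 * sqrt t * t\<^sup>2 * Q) / (Q * K)" using key' K0 Q0 by (intro divide_right_mono) auto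
    also have "\<dots> = 512 * sqrt t * t\<^sup>2 / K" using Q0 by simp
    finally have "E * sqrt u / Q \<le> 512 * sqrt t * t\<^sup>2 / ((1 + L) * u\<^sup>2)" unfolding K_def .
    then show ?thesis unfolding G t_def L_def w_def .
  qed
qed

lemma P2_lowA:
  fixes a v u :: real
  assumes a: "1/2 \<le> a" and v: "v > 0" "a * v \<le> 1" and u: "a \<le> u" "u \<le> 1"
  shows "1/36 \<le> G2 v u"
proof -
  have "(1/2) * v \<le> a * v" using a v by (intro mult_right_mono) auto
  then have "v \<le> 2" using v by linarith
  have "v * u \<le> 2 * 1" using \<open>v \<le> 2\<close> u a v by (intro mult_mono) auto
  then have "exp (- 2) \<le> exp (- v * u)" by simp
  moreover have "exp (2::real) \<le> 9"
  proof -
    have "exp (2::real) = exp 1 * exp 1" by (simp flip: exp_add)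
    also have "\<dots> \<le> 3 * 3" using exp_le by (intro mult_mono) auto
    finally show ?thesis by simp
  qed
  then have "1/9 \<le> exp (- 2::real)" by (simp add: exp_minus field_simps)
  ultimately have E: "1/9 \<le> exp (- v * u)" by linarith
  have u0: "u > 0" using a u by linarith
  have "sqrt (1/4) \<le> sqrt u" using a u by (intro real_sqrt_le_mono) auto
  moreover have "sqrt (1/4::real) = 1/2" by (simp add: real_sqrt_divide)
  ultimately have S: "1/2 \<le> sqrt u" by simp
  have "ln (1/u) \<le> 1/u - 1" using u0 by (intro ln_le_minus_one) simp
  moreover have "1/u \<le> 2" using a u u0 by (simp add: divide_le_eq)
  moreover have "ln (1/u) = - ln u" using u0 by (simp add: ln_div)
  ultimately have Lu: "1 - ln u \<le> 2" by linarith
  have lu0: "ln u \<le> 0" using u0 u by simp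
  have lu1: "ln u < 1" using lu0 by linarith
  have "1/36 = ((1/9) * (1/2)) / (2::real)" by simp
  also have "\<dots> \<le> exp (- v * u) * sqrt u / (1 - ln u)"
    using E S Lu lu0 u0 by (intro frac_le mult_mono) (auto simp: lu1)
  finally show ?thesis unfolding G2_def .
qed

lemma P2_lowB:
  fixes v u :: real
  assumes v: "v > 0" and u: "(1 / (v + 1)) / 2 \<le> u" "u \<le> 3 * (1 / (v + 1))" "u \<le> 1"
  shows "exp (- 3) * sqrt (1 / (v + 1)) / (4 * (1 + ln (v + 1))) \<le> G2 v u"
proof -
  define w where "w = v + 1"
  define t where "t = 1 / w"
  have w1: "w \<ge> 1" using v unfolding w_def by simp
  have t0: "t > 0" using w1 unfolding t_def by simp
  have ut: "t / 2 \<le> u" "u \<le> 3 * t" using u unfolding t_def w_def by auto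
  have u0: "u > 0" using ut t0 by linarith
  have "v * t \<le> 1" unfolding t_def w_def using v by (simp add: divide_le_eq)
  have "v * u \<le> v * (3 * t)" using ut v by (intro mult_left_mono) auto
  also have "\<dots> \<le> 3" using \<open>v * t \<le> 1\<close> by simp
  finally have E: "exp (- 3) \<le> exp (- v * u)" by simp
  define L where "L = ln w"
  have L0: "L \<ge> 0" unfolding L_def using w1 by simp
  have lu0: "ln u \<le> 0" using u0 u by simp
  have lu1: "ln u < 1" using lu0 by linarith
  have "ln (t / 2) \<le> ln u" using ut t0 by (subst ln_le_cancel_iff) auto
  moreover have "ln (t / 2) = ln t - ln 2" using t0 by (simp add: ln_div)
  moreover have "ln t = - L" unfolding t_def L_def using w1 by (simp add: ln_div)
  moreover have "ln (2::real) \<le> 1" using ln_le_minus_one[of 2] by simp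
  ultimately have Lu: "1 - ln u \<le> 2 * (1 + L)" using L0 unfolding distrib_left by linarith
  have "sqrt (t / 4) \<le> sqrt u" using ut t0 by (intro real_sqrt_le_mono) auto
  moreover have "sqrt (t / 4) = sqrt t / 2" by (simp add: real_sqrt_divide)
  ultimately have S: "sqrt t / 2 \<le> sqrt u" by simp
  have "exp (- 3) * sqrt t / (4 * (1 + L)) = (exp (- 3) * (sqrt t / 2)) / (2 * (1 + L))" by simp
  also have "\<dots> \<le> exp (- v * u) * sqrt u / (1 - ln u)"
    using E S Lu lu0 t0 u0 by (intro frac_le mult_mono) (auto simp: lu1)
  finally show ?thesis unfolding G2_def t_def L_def w_def .
qed



lemma inv_sq_integral:
  fixes p q :: real
  assumes "0 < p" "p \<le> q"
  shows "((\<lambda>u. 1 / u\<^sup>2) has_integral (1/p - 1/q)) {p..q}"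
proof -
  have "((\<lambda>u. 1 / u\<^sup>2) has_integral ((\<lambda>u. - 1/u) q - (\<lambda>u. - 1/u) p)) {p..q}"
  proof (rule fundamental_theorem_of_calculus[OF assms(2)])
    fix x assume x: "x \<in> {p..q}"
    then have "x > 0" using assms by auto
    show "((\<lambda>u. - 1 / u) has_vector_derivative 1 / x\<^sup>2) (at x within {p..q})"
      unfolding has_real_derivative_iff_has_vector_derivative[symmetric]
      using \<open>x > 0\<close>
      by (auto intro!: derivative_eq_intros simp: power2_eq_square field_simps)
  qed
  then show ?thesis by simp
qed

lemma int_inv_sq_bound:
  fixes f :: "real \<Rightarrow> real" and p q C :: real
  assumes "0 < p" "p \<le> q" "f integrable_on {p..q}"
    and "\<And>u. p \<le> u \<Longrightarrow> u \<le> q \<Longrightarrow> f u \<le> C * (1 / u\<^sup>2)"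
  shows "integral {p..q} f \<le> C * (1/p - 1/q)"
proof -
  have hi: "((\<lambda>u. C * (1 / u\<^sup>2)) has_integral C * (1/p - 1/q)) {p..q}"
    by (intro has_integral_mult_right inv_sq_integral assms)
  have "integral {p..q} f \<le> integral {p..q} (\<lambda>u. C * (1 / u\<^sup>2))"
    using assms hi by (intro integral_le) (auto intro: has_integral_integrable)
  also have "\<dots> = C * (1/p - 1/q)" using hi by (rule integral_unique)
  finally show ?thesis .
qed

lemma int_const_upper:
  fixes f :: "real \<Rightarrow> real" and p q C :: real
  assumes "p \<le> q" "f integrable_on {p..q}" "\<And>u. p \<le> u \<Longrightarrow> u \<le> q \<Longrightarrow> f u \<le> C"
  shows "integral {p..q} f \<le> (q - p) * C"
proof -
  have "integral {p..q} f \<le> integral {p..q} (\<lambda>u. C)"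
    using assms by (intro integral_le) auto
  then show ?thesis using assms by simp
qed

lemma int_const_lower:
  fixes f :: "real \<Rightarrow> real" and p q C :: real
  assumes "p \<le> q" "f integrable_on {p..q}" "\<And>u. p \<le> u \<Longrightarrow> u \<le> q \<Longrightarrow> C \<le> f u"
  shows "(q - p) * C \<le> integral {p..q} f"
proof -
  have "integral {p..q} (\<lambda>u. C) \<le> integral {p..q} f"
    using assms by (intro integral_le) auto
  then show ?thesis using assms by simp
qed

lemma F1_nonneg: "0 \<le> u \<Longrightarrow> 0 \<le> F1 v u"
  unfolding F1_def by (intro divide_nonneg_nonneg mult_nonneg_nonneg) auto

lemma G2_nonneg: assumes "0 \<le> u" "u \<le> 1" shows "0 \<le> G2 v u"
proof -
  have "ln u \<le> 0" using assms by (cases "u = 0") auto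
  then show ?thesis using assms unfolding G2_def by (intro divide_nonneg_nonneg mult_nonneg_nonneg) auto
qed

lemma exp_m1: "1/3 \<le> exp (- 1::real)"
  using exp_le by (simp add: exp_minus field_simps)

lemma exp_m3: "1/27 \<le> exp (- 3::real)"
proof -
  have "exp (3::real) = exp 1 * exp 1 * exp 1" by (simp flip: exp_add)
  also have "\<dots> \<le> 3 * 3 * 3" using exp_le by (intro mult_mono) auto
  finally show ?thesis by (simp add: exp_minus field_simps)
qed



lemma part1:
  fixes a v :: real
  assumes a: "0 < a" "a \<le> 1" and v: "v > 0"
  defines "f \<equiv> integral {0..a} (F1 v)"
    and "g \<equiv> 1 / ((v + 1 / a)\<^sup>2 * ((ln (v + 1 / a))\<^sup>2 + 1))"
  shows "g / 20000 \<le> f \<and> f \<le> 20000 * g"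
proof -
  define w where "w = v + 1/a"
  define s where "s = 1 / w"
  define P where "P = (ln w)\<^sup>2 + 1"
  have "1/a \<ge> 1" using a by simp
  then have w1: "w \<ge> 1" using v unfolding w_def by linarith
  have s0: "s > 0" using w1 unfolding s_def by simp
  have P0: "P > 0" unfolding P_def by (simp add: add_nonneg_pos)
  have "1 \<le> a * w" unfolding w_def using a v by (simp add: algebra_simps)
  then have sa: "s \<le> a" unfolding s_def using w1 by (simp add: divide_le_eq mult.commute)
  have gs: "g = s * s / P" unfolding g_def s_def P_def w_def by (simp add: power2_eq_square)
  have Fi: "F1 v integrable_on {0..a}" by (rule integrable_continuous_interval[OF F1_cont[OF v a(2)]])
  have Fi1: "F1 v integrable_on {0..s}" using sa s0 by (intro integrable_on_subinterval[OF Fi]) auto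
  have Fi2: "F1 v integrable_on {s..a}" using sa s0 by (intro integrable_on_subinterval[OF Fi]) auto
  have Fi3: "F1 v integrable_on {s/2..s}" using sa s0 by (intro integrable_on_subinterval[OF Fi]) auto
  have I1: "integral {0..s} (F1 v) \<le> (s - 0) * (s / P)"
  proof (rule int_const_upper)
    fix u assume "0 \<le> u" "u \<le> s"
    then show "F1 v u \<le> s / P" using P1_up1[of a v u] a v unfolding s_def P_def w_def by simp
  qed (use s0 Fi1 in auto)
  have I2: "integral {s..a} (F1 v) \<le> (12500 * s ^ 3 / P) * (1/s - 1/a)"
  proof (rule int_inv_sq_bound)
    fix u assume u: "s \<le> u" "u \<le> a"
    then have "F1 v u \<le> 12500 * s ^ 3 / (P * u\<^sup>2)"
      using P1_up2[of a v u] a v unfolding s_def P_def w_def by simp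
    also have "\<dots> = (12500 * s ^ 3 / P) * (1 / u\<^sup>2)" by simp
    finally show "F1 v u \<le> (12500 * s ^ 3 / P) * (1 / u\<^sup>2)" .
  qed (use s0 sa Fi2 in auto)
  have "(12500 * s ^ 3 / P) * (1/s - 1/a) \<le> (12500 * s ^ 3 / P) * (1/s)"
    using a P0 s0 by (intro mult_left_mono) auto
  also have "\<dots> = 12500 * (s * s / P)" using s0 by (simp add: power3_eq_cube)
  finally have I2': "integral {s..a} (F1 v) \<le> 12500 * g" using I2 unfolding gs by linarith
  have "f = integral {0..s} (F1 v) + integral {s..a} (F1 v)"
    unfolding f_def using s0 sa Henstock_Kurzweil_Integration.integral_combine[OF _ _ Fi, where c=s] by auto
  also have "\<dots> \<le> g + 12500 * g" using I1 I2' unfolding gs by simp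
  finally have up: "f \<le> 12501 * g" by simp
  have "(s - s/2) * (exp (- 1) * s / (6 * P)) \<le> integral {s/2..s} (F1 v)"
  proof (rule int_const_lower)
    fix u assume "s/2 \<le> u" "u \<le> s"
    then show "exp (- 1) * s / (6 * P) \<le> F1 v u"
      using P1_low[of a v u] a v unfolding s_def P_def w_def by simp
  qed (use s0 Fi3 in auto)
  also have "\<dots> \<le> f" unfolding f_def
    using s0 sa Fi3 Fi by (intro integral_subset_le) (auto intro: F1_nonneg)
  finally have lowf: "(s - s/2) * (exp (- 1) * s / (6 * P)) \<le> f" .
  have "g / 36 = (s - s/2) * ((1/3) * s / (6 * P))" unfolding gs by (simp add: field_simps)
  also have "\<dots> \<le> (s - s/2) * (exp (- 1) * s / (6 * P))"
    using s0 P0 exp_m1 by (intro mult_left_mono divide_right_mono mult_right_mono) auto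
  finally have low: "g / 36 \<le> f" using lowf by linarith
  have g0: "g \<ge> 0" unfolding gs using s0 P0 by simp
  show ?thesis using up low g0 by auto
qed

lemma part2:
  fixes a v :: real
  assumes a: "0 \<le> a" "a \<le> 1" and v: "v > 0" and av: "a * v \<le> 1"
  defines "f \<equiv> integral {a..1} (G2 v)"
    and "g \<equiv> (1 - a) / ((v + 1) powr (3/2) * (1 + ln (v + 1)))"
  shows "g / 20000 \<le> f \<and> f \<le> 20000 * g"
proof -
  define w where "w = v + 1"
  define t where "t = 1 / w"
  define L where "L = ln w"
  define B where "B = t * sqrt t / (1 + L)"
  define C where "C = 512 * sqrt t * t\<^sup>2 / (1 + L)"
  have w1: "w \<ge> 1" using v unfolding w_def by simp
  have t0: "t > 0" using w1 unfolding t_def by simp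
  have t1: "t \<le> 1" using w1 unfolding t_def by simp
  have L0: "L \<ge> 0" using w1 unfolding L_def by simp
  have P0: "1 + L > 0" using L0 by linarith
  have B0: "B \<ge> 0" unfolding B_def using t0 P0 by simp
  have "t * sqrt t \<le> 1 * 1" using t0 t1 by (intro mult_mono) auto
  then have B1: "B \<le> 1" unfolding B_def using P0 L0 by (simp add: divide_le_eq)
  have wp: "w powr (3/2) = w * sqrt w" using powr_add[of w 1 "1/2"] w1 by (simp add: powr_half_sqrt)
  have gB: "g = (1 - a) * B"
    unfolding g_def B_def t_def w_def[symmetric] L_def[symmetric] wp using w1
    by (simp add: real_sqrt_divide field_simps)
  have CB: "C \<le> 512 * B"
  proof -
    have "sqrt t * t\<^sup>2 \<le> t * sqrt t" using t0 t1 by (simp add: power2_eq_square mult_left_le_one_le)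
    then show ?thesis unfolding C_def B_def using P0 by (simp add: divide_right_mono)
  qed
  have Gi: "G2 v integrable_on {0..1}" by (rule integrable_continuous_interval[OF G2_cont[OF v]])
  have Gsub: "G2 v integrable_on {p..q}" if "0 \<le> p" "q \<le> 1" for p q
    using that by (intro integrable_on_subinterval[OF Gi]) auto
  have Gpt: "G2 v u \<le> C * (1 / u\<^sup>2)" if "0 < u" "u \<le> 1" for u
  proof -
    have "G2 v u \<le> 512 * sqrt t * t\<^sup>2 / ((1 + L) * u\<^sup>2)"
      using P2_up[of v u] that v unfolding t_def L_def w_def by simp
    also have "\<dots> = C * (1 / u\<^sup>2)" unfolding C_def by simp
    finally show ?thesis .
  qed
  show ?thesis
  proof (cases "a \<ge> 1/2")
    case True
    have "f \<le> C * (1/a - 1/1)" unfolding f_def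
      using True a Gsub Gpt by (intro int_inv_sq_bound) auto
    also have "1/a - 1/1 \<le> 2 * (1 - a)"
    proof -
      have a0: "a > 0" using True by linarith
      have "1/a - 1/1 = (1 - a) * (1/a)" using a0 by (simp add: field_simps)
      also have "\<dots> \<le> (1 - a) * 2" using a True a0 by (intro mult_left_mono) (auto simp: divide_le_eq)
      finally show ?thesis by simp
    qed
    then have "C * (1/a - 1/1) \<le> (512 * B) * (2 * (1 - a))"
      using CB a True B0 by (intro mult_mono) (auto simp: field_simps C_def P0 t0)
    also have "(512 * B) * (2 * (1 - a)) = 1024 * g" unfolding gB by simp
    finally have up: "f \<le> 1024 * g" .
    have "(1 - a) * (1/36) \<le> f" unfolding f_def
      using True a Gsub P2_lowA[of a v] v av by (intro int_const_lower) auto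
    moreover have "(1 - a) * B \<le> (1 - a) * 1" using B1 a by (intro mult_left_mono) auto
    then have "g / 36 \<le> (1 - a) * (1/36)" unfolding gB by simp
    ultimately have low: "g / 36 \<le> f" by linarith
    have g0: "g \<ge> 0" unfolding gB using B0 a by simp
    show ?thesis using up low g0 by auto
  next
    case False
    then have ah: "a < 1/2" by simp
    have "f \<le> integral {0..1} (G2 v)" unfolding f_def
      using a Gsub Gi by (intro integral_subset_le) (auto intro: G2_nonneg)
    also have "\<dots> = integral {0..t} (G2 v) + integral {t..1} (G2 v)"
      using t0 t1 Henstock_Kurzweil_Integration.integral_combine[OF _ _ Gi, where c=t] by auto
    also have "integral {0..t} (G2 v) \<le> (t - 0) * (sqrt t / (1 + L))"
    proof (rule int_const_upper)
      fix u assume "0 \<le> u" "u \<le> t"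
      then show "G2 v u \<le> sqrt t / (1 + L)" using P2_up0[of v u] v unfolding t_def L_def w_def by simp
    qed (use t0 t1 Gsub in auto)
    also have "integral {t..1} (G2 v) \<le> C * (1/t - 1/1)"
      using t0 t1 Gsub Gpt by (intro int_inv_sq_bound) auto
    also have "C * (1/t - 1/1) \<le> C * (1/t)"
      using t0 t1 P0 by (intro mult_left_mono) (auto simp: C_def)
    also have "C * (1/t) = 512 * B" unfolding C_def B_def using t0 by (simp add: power2_eq_square)
    finally have "f \<le> (t - 0) * (sqrt t / (1 + L)) + 512 * B" by simp
    also have "(t - 0) * (sqrt t / (1 + L)) = B" unfolding B_def by simp
    finally have f1: "f \<le> 513 * B" by simp
    have "B * 1 \<le> B * (2 * (1 - a))" using ah B0 by (intro mult_left_mono) auto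
    then have "B \<le> 2 * (1 - a) * B" by (simp add: mult.commute)
    moreover have "1026 * g = 513 * (2 * (1 - a) * B)" unfolding gB by simp
    ultimately have up: "f \<le> 1026 * g" using f1 by linarith
    define m where "m = max a (t / 2)"
    have "a * w \<le> 2" unfolding w_def using av ah by (simp add: algebra_simps)
    then have a2t: "a \<le> 2 * t" unfolding t_def using w1 by (simp add: field_simps)
    have m1: "a \<le> m" "t / 2 \<le> m" "m \<le> 2 * t" "m + t / 2 \<le> 1"
      unfolding m_def using a2t t0 t1 ah by auto
    have "(m + t/2 - m) * (exp (- 3) * sqrt t / (4 * (1 + L))) \<le> integral {m..m + t/2} (G2 v)"
    proof (rule int_const_lower)
      fix u assume u: "m \<le> u" "u \<le> m + t/2"
      then have "t/2 \<le> u" "u \<le> 3 * t" "u \<le> 1" using m1 by auto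
      from P2_lowB[OF v this[unfolded t_def w_def]]
      show "exp (- 3) * sqrt t / (4 * (1 + L)) \<le> G2 v u"
        unfolding t_def L_def w_def .
    qed (use t0 m1 a Gsub in auto)
    also have "\<dots> \<le> f" unfolding f_def
      using m1 a t0 Gsub by (intro integral_subset_le) (auto intro: G2_nonneg)
    finally have lowf: "(t/2) * (exp (- 3) * sqrt t / (4 * (1 + L))) \<le> f" by simp
    have "g / 216 \<le> B / 216" unfolding gB using B0 a by (simp add: mult_left_le_one_le)
    also have "B / 216 = (t/2) * ((1/27) * sqrt t / (4 * (1 + L)))" unfolding B_def by simp
    also have "\<dots> \<le> (t/2) * (exp (- 3) * sqrt t / (4 * (1 + L)))"
      using t0 P0 exp_m3 by (intro mult_left_mono divide_right_mono mult_right_mono) auto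
    finally have low: "g / 216 \<le> f" using lowf by linarith
    have g0: "g \<ge> 0" unfolding gB using B0 a by simp
    show ?thesis using up low g0 by auto
  qed
qed


theorem mainTheorem11:
  shows "(\<exists>c>0. \<forall>a v::real. 0 < a \<and> a \<le> 1 \<and> v > 0 \<longrightarrow>
            (let f = integral {0..a} (\<lambda>u. exp (- v * u) * u / ((ln u)\<^sup>2 + 1));
                 g = 1 / ((v + 1 / a)\<^sup>2 * ((ln (v + 1 / a))\<^sup>2 + 1))
             in g / c \<le> f \<and> f \<le> c * g))
       \<and> (\<exists>c>0. \<forall>a v::real. 0 \<le> a \<and> a \<le> 1 \<and> v > 0 \<and> a * v \<le> 1 \<longrightarrow>
            (let f = integral {a..1} (\<lambda>u. exp (- v * u) * sqrt u / (1 - ln u));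
                 g = (1 - a) / ((v + 1) powr (3/2) * (1 + ln (v + 1)))
             in g / c \<le> f \<and> f \<le> c * g))"
proof (intro conjI)
  show "\<exists>c>0. \<forall>a v::real. 0 < a \<and> a \<le> 1 \<and> v > 0 \<longrightarrow>
            (let f = integral {0..a} (\<lambda>u. exp (- v * u) * u / ((ln u)\<^sup>2 + 1));
                 g = 1 / ((v + 1 / a)\<^sup>2 * ((ln (v + 1 / a))\<^sup>2 + 1))
             in g / c \<le> f \<and> f \<le> c * g)"
  proof (intro exI[of _ 20000] conjI allI impI)
    fix a v :: real
    assume H: "0 < a \<and> a \<le> 1 \<and> v > 0"
    have eq: "(\<lambda>u. exp (- v * u) * u / ((ln u)\<^sup>2 + 1)) = F1 v" by (rule ext) (simp add: F1_def)
    show "let f = integral {0..a} (\<lambda>u. exp (- v * u) * u / ((ln u)\<^sup>2 + 1));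
                 g = 1 / ((v + 1 / a)\<^sup>2 * ((ln (v + 1 / a))\<^sup>2 + 1))
             in g / 20000 \<le> f \<and> f \<le> 20000 * g"
      unfolding eq Let_def using part1[of a v] H by blast
  qed simp
  show "\<exists>c>0. \<forall>a v::real. 0 \<le> a \<and> a \<le> 1 \<and> v > 0 \<and> a * v \<le> 1 \<longrightarrow>
            (let f = integral {a..1} (\<lambda>u. exp (- v * u) * sqrt u / (1 - ln u));
                 g = (1 - a) / ((v + 1) powr (3/2) * (1 + ln (v + 1)))
             in g / c \<le> f \<and> f \<le> c * g)"
  proof (intro exI[of _ 20000] conjI allI impI)
    fix a v :: real
    assume H: "0 \<le> a \<and> a \<le> 1 \<and> v > 0 \<and> a * v \<le> 1"
    have eq: "(\<lambda>u. exp (- v * u) * sqrt u / (1 - ln u)) = G2 v" by (rule ext) (simp add: G2_def)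
    show "let f = integral {a..1} (\<lambda>u. exp (- v * u) * sqrt u / (1 - ln u));
                 g = (1 - a) / ((v + 1) powr (3/2) * (1 + ln (v + 1)))
             in g / 20000 \<le> f \<and> f \<le> 20000 * g"
      unfolding eq Let_def using part2[of a v] H by blast
  qed simp
qed

end
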